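(* Let $p$ be an odd prime and $b,c\in\mathbb Z$. Then, for every integer $x$, $$(x^2+bx+c)^{p-2}-c^{p-2}\equiv \binom{p-2}{1}_{b,c}x^{p-1}+\binom{p-2}{0}_{b,c}x^{p-2}+\sum_{1<k<p-1}\left(\binom{p-2}{k}_{b,c}+c^{p-1-k}\binom{p-2}{p-1-k}_{b,c}\right)x^{k-1}\pmod p.$$ Equivalently, the two sides are congruent as polynomials in $\mathbb F_p[x]$ modulo $x^p-x$.
   Context: For $n\in\mathbb N$ and $b,c\in\mathbb Z$, the generalized trinomial coefficients $\binom{n}{k}_{b,c}$ ($k\in\mathbb Z$) are the integers defined by the Laurent polynomial identity $\left(x+b+\frac{c}{x}\right)^n=\sum_{k\in\mathbb Z}\binom{n}{k}_{b,c}x^k$; in particular $\binom nk_{b,c}=0$ when $|k|>n$. *)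

theory Defs
  imports "HOL-Computational_Algebra.Polynomial" "HOL-Number_Theory.Cong" "HOL-Computational_Algebra.Primes"
begin

text \<open>Generalized trinomial coefficient: the coefficient of x^k in the Laurent
polynomial (x + b + c/x)^n.  Since (x + b + c/x)^n = x^(-n) (x^2 + b x + c)^n,
this is the coefficient of x^(n+k) in the polynomial (x^2 + b x + c)^n, and it is
0 when n + k < 0 (in fact whenever |k| > n).\<close>
definition trinom :: "nat \<Rightarrow> int \<Rightarrow> int \<Rightarrow> int \<Rightarrow> int" where
  "trinom n k b c =
     (if int n + k < 0 then 0 else coeff ([:c, b, 1:] ^ n) (nat (int n + k)))"

end

theory Submission imports Defs "HOL-Number_Theory.Number_Theory" begin

lemma fermat_int:
  fixes x :: int and p :: nat
  assumes "prime p"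
  shows "[x ^ p = x] (mod int p)"
proof (cases "int p dvd x")
  case True
  have "p > 0" using assms prime_gt_0_nat by blast
  then have "int p dvd x ^ p" using True by (meson dvd_power dvd_trans)
  then show ?thesis using True by (simp add: cong_def zmod_eq_0_iff dvd_eq_mod_eq_0)
next
  case False
  define a where "a = nat (x mod int p)"
  have p0: "p > 1" using assms prime_gt_1_nat by blast
  have ax: "int a = x mod int p" unfolding a_def using p0 by simp
  have xa: "[x = int a] (mod int p)" using ax by (simp add: cong_def)
  have nd: "\<not> p dvd a"
  proof
    assume "p dvd a"
    then have "int p dvd int a" by simp
    then have "int p dvd x" using xa by (metis cong_dvd_iff)
    then show False using False by simp
  qed
  have "[a ^ (p - 1) = 1] (mod p)" by (rule fermat_theorem[OF assms nd])
  then have "[a ^ (p - 1) * a = 1 * a] (mod p)" by (rule cong_mult) simp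
  then have "[a ^ p = a] (mod p)" using p0
    by (metis mult.left_neutral power_minus_mult less_imp_le_nat less_le_trans zero_less_one)
  then have "[int a ^ p = int a] (mod int p)"
    by (metis cong_int_iff of_nat_power)
  moreover have "[x ^ p = int a ^ p] (mod int p)" using xa by (rule cong_pow)
  ultimately show ?thesis using xa by (meson cong_sym cong_trans)
qed

definition A :: "int \<Rightarrow> int \<Rightarrow> nat \<Rightarrow> int \<Rightarrow> int" where
  "A b c n m = (if m < 0 then 0 else Polynomial.coeff ([:c, b, 1:] ^ n) (nat m))"

lemma A_Suc: "A b c (Suc n) m = c * A b c n m + b * A b c n (m - 1) + A b c n (m - 2)"
proof -
  define P where "P = [:c, b, 1:] ^ n"
  have e: "[:c, b, 1:] ^ Suc n = Polynomial.smult c P + pCons 0 (Polynomial.smult b P + pCons 0 P)"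
    unfolding P_def by (simp add: mult_pCons_left)
  consider "m < 0" | "m = 0" | "m = 1" | "m \<ge> 2" by linarith
  then show ?thesis
  proof cases
    case 1 then show ?thesis by (simp add: A_def)
  next
    case 2 then show ?thesis by (simp add: A_def e P_def)
  next
    case 3 then show ?thesis by (simp add: A_def e P_def numeral_2_eq_2)
  next
    case 4
    then obtain k where k: "m = int k + 2" by (metis add.commute le_iff_add nat_int zle_iff_zadd)
    have "nat m = Suc (Suc k)" using k by simp
    moreover have "nat (m - 1) = Suc k" using k by simp
    moreover have "nat (m - 2) = k" using k by simp
    ultimately show ?thesis using 4 by (simp add: A_def e P_def)
  qed
qed

lemma A_sym: "A b c n (int n - int k) = c ^ k * A b c n (int n + int k)"
proof (induction n arbitrary: k)
  case 0
  then show ?case by (cases k) (auto simp: A_def)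
next
  case (Suc n)
  show ?case
  proof (cases k)
    case 0 then show ?thesis by simp
  next
    case (Suc j)
    have h1: "A b c n (int n - int j) = c ^ j * A b c n (int n + int j)" by (rule Suc.IH)
    have h2: "A b c n (int n - int k) = c ^ k * A b c n (int n + int k)" by (rule Suc.IH)
    have h3: "A b c n (int n - int (Suc k)) = c ^ Suc k * A b c n (int n + int (Suc k))" by (rule Suc.IH)
    have "A b c (Suc n) (int (Suc n) - int k)
       = c * A b c n (int n - int j) + b * A b c n (int n - int k) + A b c n (int n - int (Suc k))"
      by (simp add: A_Suc \<open>k = Suc j\<close> algebra_simps)
    also have "\<dots> = c ^ k * (c * A b c n (int n + int (Suc k)) + b * A b c n (int n + int k) + A b c n (int n + int j))"
      using h1 h2 h3 by (simp add: \<open>k = Suc j\<close> algebra_simps)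
    also have "\<dots> = c ^ k * A b c (Suc n) (int (Suc n) + int k)"
      by (simp add: A_Suc \<open>k = Suc j\<close> algebra_simps)
    finally show ?thesis .
  qed
qed

lemma fermat_shift:
  fixes x :: int and p m :: nat
  assumes "prime p" "m \<ge> 1"
  shows "[x ^ (m + (p - 1)) = x ^ m] (mod int p)"
proof -
  have p1: "p \<ge> 1" using prime_gt_0_nat[OF assms(1)] by simp
  have ee: "m + (p - 1) = (m - 1) + p" using assms(2) p1 by simp
  have e: "x ^ (m + (p - 1)) = x ^ (m - 1) * x ^ p"
    unfolding ee by (rule power_add)
  have "[x ^ (m - 1) * x ^ p = x ^ (m - 1) * x] (mod int p)"
    by (rule cong_mult[OF cong_refl fermat_int[OF assms(1)]])
  moreover have "x ^ (m - 1) * x = x ^ m" using assms(2)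
    by (cases m) simp_all
  ultimately show ?thesis using e by simp
qed

theorem lemma2p2:
  fixes p :: nat and b c x :: int
  assumes "prime p" and "odd p"
  shows "[(x^2 + b*x + c)^(p-2) - c^(p-2)
          = trinom (p-2) 1 b c * x^(p-1) + trinom (p-2) 0 b c * x^(p-2)
            + (\<Sum>k\<in>{k. 1 < k \<and> k < p-1}.
                 (trinom (p-2) (int k) b c + c^(p-1-k) * trinom (p-2) (int (p-1-k)) b c)
                 * x^(k-1))] (mod int p)"
proof -
  have p2: "p \<ge> 2" using assms(1) prime_ge_2_nat by blast
  have "p \<noteq> 2" using assms(2) by auto
  then have p3: "p \<ge> 3" using p2 by linarith
  define n where "n = p - 2"
  have n1: "n \<ge> 1" and pn: "p = n + 2" using p3 unfolding n_def by auto
  define Q where "Q = [:c, b, 1:]"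
  define a where "a j = Polynomial.coeff (Q ^ n) j" for j
  have tr: "trinom n (int j) b c = a (n + j)" for j
    by (simp add: trinom_def a_def Q_def nat_add_distrib)
  have aA: "A b c n (int j) = a j" for j by (simp add: A_def a_def Q_def)
  have sym: "c ^ (n + 1 - k) * a (2 * n + 1 - k) = a (k - 1)" if "2 \<le> k" "k \<le> n" for k
  proof -
    have e1: "int n - int (n + 1 - k) = int (k - 1)" using that by simp
    have e2: "int n + int (n + 1 - k) = int (2 * n + 1 - k)" using that by simp
    have "A b c n (int n - int (n + 1 - k)) = c ^ (n + 1 - k) * A b c n (int n + int (n + 1 - k))"
      by (rule A_sym)
    then show ?thesis unfolding e1 e2 aA by simp
  qed
  have set: "{k. 1 < k \<and> k < p-1} = {2..n}" using pn by auto
  have "(\<Sum>k\<in>{k. 1 < k \<and> k < p-1}.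
                 (trinom (p-2) (int k) b c + c^(p-1-k) * trinom (p-2) (int (p-1-k)) b c)
                 * x^(k-1))
      = (\<Sum>k\<in>{2..n}. a (n + k) * x ^ (k - 1) + a (k - 1) * x ^ (k - 1))" (is "?S = _")
    unfolding set
  proof (rule sum.cong[OF refl])
    fix k assume k: "k \<in> {2..n}"
    have q1: "p - 1 - k = n + 1 - k" "p - 2 = n" using pn by auto
    have "trinom n (int (n+1-k)) b c = a (2 * n + 1 - k)"
      using tr[of "n+1-k"] k by (simp add: mult_2)
    then show "(trinom (p-2) (int k) b c + c^(p-1-k) * trinom (p-2) (int (p-1-k)) b c) * x^(k-1)
        = a (n + k) * x ^ (k - 1) + a (k - 1) * x ^ (k - 1)"
      unfolding q1 using sym[of k] k tr[of k] by (simp add: algebra_simps)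
  qed
  note S = this
  have T1: "trinom (p-2) 1 b c = a (n+1)" using tr[of 1] n_def by simp
  have T0: "trinom (p-2) 0 b c = a n" using tr[of 0] n_def by simp
  have P1: "p - 1 = n + 1" "p - 2 = n" using pn by auto
  have C: "[(\<Sum>k\<in>{2..n}. a (n + k) * x ^ (k - 1) + a (k - 1) * x ^ (k - 1))
       = (\<Sum>k\<in>{2..n}. a (n + k) * x ^ (n + k) + a (k - 1) * x ^ (k - 1))] (mod int p)"
  proof (rule cong_sum)
    fix k assume k: "k \<in> {2..n}"
    have "[x ^ ((k - 1) + (p - 1)) = x ^ (k - 1)] (mod int p)"
      using k by (intro fermat_shift assms(1)) auto
    moreover have "(k - 1) + (p - 1) = n + k" using k pn by auto
    ultimately have "[x ^ (k - 1) = x ^ (n + k)] (mod int p)" by (simp add: cong_sym)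
    then show "[a (n + k) * x ^ (k - 1) + a (k - 1) * x ^ (k - 1)
        = a (n + k) * x ^ (n + k) + a (k - 1) * x ^ (k - 1)] (mod int p)"
      by (intro cong_add cong_mult cong_refl)
  qed
  have lhs: "(x^2 + b*x + c)^n - c^n = (\<Sum>j\<in>{1..2*n}. a j * x ^ j)"
  proof -
    have "poly Q x = x^2 + b*x + c" by (simp add: Q_def algebra_simps power2_eq_square)
    then have "(x^2 + b*x + c)^n = poly (Q ^ n) x" by (simp add: poly_power)
    also have "\<dots> = (\<Sum>j\<le>degree (Q ^ n). a j * x ^ j)" by (simp add: poly_altdef a_def)
    also have "\<dots> = (\<Sum>j\<le>2*n. a j * x ^ j)"
    proof (rule sum.mono_neutral_left)
      have "degree (Q ^ n) \<le> degree Q * n" by (rule degree_power_le)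
      then show "{..degree (Q ^ n)} \<subseteq> {..2 * n}" by (auto simp: Q_def)
      show "\<forall>i\<in>{..2 * n} - {..degree (Q ^ n)}. a i * x ^ i = 0"
        by (auto simp: a_def coeff_eq_0)
    qed auto
    also have "\<dots> = a 0 + (\<Sum>j\<in>{1..2*n}. a j * x ^ j)"
      by (simp add: atMost_atLeast0 sum.atLeast_Suc_atMost)
    also have "a 0 = c ^ n" by (simp add: a_def coeff_0_power Q_def)
    finally show ?thesis by simp
  qed
  have split: "(\<Sum>j\<in>{1..2*n}. a j * x ^ j) = a (n+1) * x^(n+1) + a n * x^n
       + (\<Sum>k\<in>{2..n}. a (n + k) * x ^ (n + k) + a (k - 1) * x ^ (k - 1))"
  proof -
    let ?f = "\<lambda>j. a j * x ^ j"
    have s1: "sum ?f {1..2*n} = sum ?f {1..n-1} + sum ?f {n..2*n}"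
      using sum.ub_add_nat[of 1 "n-1" ?f "n+1"] n1 by (simp add: mult_2)
    have s2: "sum ?f {n..2*n} = sum ?f {n..n+1} + sum ?f {n+2..2*n}"
      using sum.ub_add_nat[of n "n+1" ?f "n-1"] n1 by (simp add: mult_2)
    have s3: "sum ?f {n..n+1} = ?f n + ?f (n+1)" by simp
    have s4: "sum ?f {1..n-1} = (\<Sum>k\<in>{2..n}. ?f (k - 1))"
      using sum.shift_bounds_cl_nat_ivl[of "\<lambda>k. ?f (k - 1)" 1 1 "n-1"] n1 by (simp add: numeral_2_eq_2)
    have s5: "sum ?f {n+2..2*n} = (\<Sum>k\<in>{2..n}. ?f (n + k))"
      using sum.shift_bounds_cl_nat_ivl[of ?f 2 n n] by (simp add: mult_2 add.commute)
    show ?thesis using s1 s2 s3 s4 s5 by (simp add: sum.distrib)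
  qed
  have "[(x^2 + b*x + c)^n - c^n = a (n+1) * x^(n+1) + a n * x^n
       + (\<Sum>k\<in>{2..n}. a (n + k) * x ^ (k - 1) + a (k - 1) * x ^ (k - 1))] (mod int p)"
    unfolding lhs split by (intro cong_add cong_refl) (rule cong_sym[OF C])
  note X = this
  have R: "trinom (p-2) 1 b c * x^(p-1) + trinom (p-2) 0 b c * x^(p-2)
            + (\<Sum>k\<in>{k. 1 < k \<and> k < p-1}.
                 (trinom (p-2) (int k) b c + c^(p-1-k) * trinom (p-2) (int (p-1-k)) b c)
                 * x^(k-1))
     = a (n+1) * x^(n+1) + a n * x^n
       + (\<Sum>k\<in>{2..n}. a (n + k) * x ^ (k - 1) + a (k - 1) * x ^ (k - 1))"
    apply (subst S, subst T1, subst T0) unfolding P1 by (rule refl)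
  show ?thesis unfolding n_def[symmetric] R[unfolded n_def[symmetric]] by (rule X)
qed

end
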